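(* Let $\varepsilon=\varepsilon(n)$ satisfy $\varepsilon\le1$ and $n\varepsilon\to\infty$. In the variable-processor cup game on $n$ cups with $\varepsilon$ resource augmentation, suppose the emptier uses proportional emptying and the filler always places at least $1/n^2$ units of water into every cup in every round. Then there is a constant $C$ such that at any time $t$ the backlog is at most $C\varepsilon^{-1}\log n$ with probability at least $1-1/\mathrm{poly}(n)$ (high probability in $n$), against any adaptive filler.
   Context: Variable-processor cup game with $\varepsilon$ resource augmentation: nonnegative real fills, initially $0$; each round the filler chooses an integer $1\le p\le n$ and reals $q_1,\dots,q_n\in[0,1]$ with $\sum q_j=p$ and adds $q_j$ to cup $j$; then the emptier chooses $p$ distinct cups and replaces each of their fills $x$ by $\max(0,x-(1+\varepsilon))$. Backlog = maximum fill. The filler is adaptive (sees the outcomes of the emptier's previous random choices). Proportional emptying: in each round the emptier selects a random set of $p$ distinct cups such that each cup $j$ is included with probability exactly $q_j$ (such a distribution exists). *)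

theory Defs
  imports "HOL-Probability.Probability"
begin

text \<open>Histories: the list of sets of cups emptied in rounds 0,1,...
  A (deterministic, adaptive) filler strategy maps a history to the pair (p, q)
  chosen in the next round.\<close>

type_synonym history = "nat set list"
type_synonym filler = "history \<Rightarrow> nat \<times> (nat \<Rightarrow> real)"
type_synonym emptier = "history \<Rightarrow> nat set pmf"

primrec fills_pref :: "filler \<Rightarrow> real \<Rightarrow> history \<Rightarrow> nat \<Rightarrow> (nat \<Rightarrow> real)" where
  "fills_pref F e h 0 = (\<lambda>j. 0)"
| "fills_pref F e h (Suc k) =
     (\<lambda>j. let x = fills_pref F e h k j + snd (F (take k h)) j
          in if j \<in> h ! k then max 0 (x - (1 + e)) else x)"

definition fills :: "filler \<Rightarrow> real \<Rightarrow> history \<Rightarrow> (nat \<Rightarrow> real)" where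
  "fills F e h = fills_pref F e h (length h)"

definition backlog :: "nat \<Rightarrow> filler \<Rightarrow> real \<Rightarrow> history \<Rightarrow> real" where
  "backlog n F e h = Max ((\<lambda>j. fills F e h j) ` {..<n})"

primrec hist_pmf :: "emptier \<Rightarrow> nat \<Rightarrow> history pmf" where
  "hist_pmf E 0 = return_pmf []"
| "hist_pmf E (Suc t) = bind_pmf (hist_pmf E t) (\<lambda>h. map_pmf (\<lambda>S. h @ [S]) (E h))"

definition valid_filler :: "nat \<Rightarrow> filler \<Rightarrow> bool" where
  "valid_filler n F \<longleftrightarrow> (\<forall>h. 1 \<le> fst (F h) \<and> fst (F h) \<le> n
      \<and> (\<forall>j<n. 0 \<le> snd (F h) j \<and> snd (F h) j \<le> 1 \<and> 1 / (real n)^2 \<le> snd (F h) j)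
      \<and> (\<Sum>j<n. snd (F h) j) = real (fst (F h)))"

definition proportional_emptier :: "nat \<Rightarrow> filler \<Rightarrow> emptier \<Rightarrow> bool" where
  "proportional_emptier n F E \<longleftrightarrow> (\<forall>h.
      (\<forall>S\<in>set_pmf (E h). S \<subseteq> {..<n} \<and> card S = fst (F h))
      \<and> (\<forall>j<n. measure_pmf.prob (E h) {S. j \<in> S} = snd (F h) j))"

end

theory Submission
  imports Defs
begin

lemma fills_pref_append:
  "k \<le> length h \<Longrightarrow> fills_pref F e (h @ [S]) k = fills_pref F e h k"
proof (induction k)
  case 0
  then show ?case by simp
next
  case (Suc k)
  then have "k < length h" by simp
  then show ?case using Suc by (simp add: nth_append)
qed

lemma fills_snoc:
  "fills F e (h @ [S]) j = (let x = fills F e h j + snd (F h) j in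
     if j \<in> S then max 0 (x - (1 + e)) else x)"
  unfolding fills_def by (simp add: fills_pref_append nth_append)

lemma fin_hist:
  assumes "\<And>h. finite (set_pmf (E h))"
  shows "finite (set_pmf (hist_pmf E t))"
  by (induction t) (auto simp: assms)

lemma exp_neg_le: "0 \<le> (y::real) \<Longrightarrow> exp (- y) \<le> 1 / (1 + y)"
proof -
  assume "0 \<le> y"
  have "1 + y \<le> exp y" by (rule exp_ge_add_one_self)
  then show ?thesis using \<open>0 \<le> y\<close> by (simp add: exp_minus field_simps)
qed

lemma key_ineq:
  fixes e :: real
  assumes "0 < e" "e \<le> 1"
  shows "e/4 - (1 - exp (- (e/4*(1+e)))) \<le> - (e^2/12)"
proof -
  define y where "y = e/4*(1+e)"
  have e2: "e * (1 + e) \<le> 1 * 2" using assms by (intro mult_mono) auto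
  have y0: "0 \<le> y" "y \<le> 1/2" using assms e2 unfolding y_def by auto
  have "exp (-y) \<le> 1/(1+y)" using exp_neg_le y0 by simp
  then have "e/4 - (1 - exp (-y)) \<le> e/4 - (1 - 1/(1+y))" by simp
  also have "\<dots> = e/4 * (y - e) / (1 + y)" using y0 unfolding y_def by (simp add: field_simps)
  also have "\<dots> \<le> - (e^2/12)"
  proof -
    have "e * e \<le> e * 1" using assms by (intro mult_left_mono) auto
    then have "y - e \<le> - (e/2)" unfolding y_def by (simp add: field_simps)
    then have "e/4 * (y - e) \<le> e/4 * (- (e/2))" using assms by (intro mult_left_mono) auto
    then have "e/4 * (y - e) \<le> - (e^2/8)" by (simp add: power2_eq_square)
    then have "e/4 * (y - e) / (1 + y) \<le> - (e^2/8) / (1+y)" using y0 by (intro divide_right_mono) auto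
    also have "\<dots> = - ((e^2/8) / (1+y))" by simp
    also have "(e^2/8) / (1+y) \<ge> (e^2/8) / (3/2)" using y0 assms
      by (intro divide_left_mono) auto
    then have "- ((e^2/8) / (1+y)) \<le> - (e^2/12)" by simp
    finally show ?thesis .
  qed
  finally show ?thesis unfolding y_def .
qed

lemma expect_if:
  fixes M :: "'a set pmf"
  assumes "finite (set_pmf M)"
  shows "measure_pmf.expectation M (\<lambda>S. if j \<in> S then a else (b::real))
     = a * measure_pmf.prob M {S. j \<in> S} + b * (1 - measure_pmf.prob M {S. j \<in> S})"
proof -
  have "(\<lambda>S. if j \<in> S then a else b) = (\<lambda>S. b + (a - b) * indicator {S. j \<in> S} S)"
    by (auto simp: indicator_def)
  then have "measure_pmf.expectation M (\<lambda>S. if j \<in> S then a else (b::real))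
     = measure_pmf.expectation M (\<lambda>S. b + (a - b) * indicator {S. j \<in> S} S)" by simp
  also have "\<dots> = b + (a - b) * measure_pmf.prob M {S. j \<in> S}"
    using assms by (simp add: integrable_measure_pmf_finite)
  finally show ?thesis by (simp add: algebra_simps)
qed


lemma cup_step:
  fixes M :: "nat set pmf" and e x q qm :: real
  assumes fin: "finite (set_pmf M)" and e: "0 < e" "e \<le> 1"
    and q: "0 \<le> q" "q \<le> 1" "qm \<le> q" and pr: "measure_pmf.prob M {S. j \<in> S} = q"
  shows "measure_pmf.expectation M
           (\<lambda>S. exp (e/4 * (if j \<in> S then max 0 (x + q - (1 + e)) else x + q)))
         \<le> 1 + exp (e/4 * x) * exp (- (e^2/12) * qm)"
proof -
  define l where "l = e/4"
  define y where "y = l * (1 + e)"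
  have l0: "0 < l" using e unfolding l_def by simp
  have y0: "0 \<le> y" using e l0 unfolding y_def by simp
  have pt: "exp (l * (if j \<in> S then max 0 (x + q - (1 + e)) else x + q))
      \<le> (if j \<in> S then 1 + exp (l * (x + q)) * exp (- y) else 1 + exp (l * (x + q)) * 1)" for S
  proof (cases "j \<in> S")
    case True
    have "exp (l * max 0 (x + q - (1 + e))) \<le> 1 + exp (l * (x + q - (1 + e)))"
      by (cases "0 \<le> x + q - (1 + e)") (auto simp: max_def)
    also have "exp (l * (x + q - (1 + e))) = exp (l * (x + q)) * exp (- y)"
      unfolding y_def by (simp add: algebra_simps flip: exp_add)
    finally show ?thesis using True by simp
  qed simp
  have "measure_pmf.expectation M
           (\<lambda>S. exp (l * (if j \<in> S then max 0 (x + q - (1 + e)) else x + q)))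
      \<le> measure_pmf.expectation M
           (\<lambda>S. if j \<in> S then 1 + exp (l * (x + q)) * exp (- y) else 1 + exp (l * (x + q)) * 1)"
    using fin pt by (intro integral_mono integrable_measure_pmf_finite) auto
  also have "\<dots> = (1 + exp (l * (x + q)) * exp (- y)) * q + (1 + exp (l * (x + q))) * (1 - q)"
    using expect_if[OF fin] pr by simp
  also have "\<dots> = 1 + exp (l * (x + q)) * (1 - q * (1 - exp (- y)))"
    by (simp add: algebra_simps)
  also have "\<dots> \<le> 1 + exp (l * (x + q)) * exp (- (q * (1 - exp (- y))))"
    using exp_ge_add_one_self[of "- (q * (1 - exp (- y)))"] by simp
  also have "exp (l * (x + q)) * exp (- (q * (1 - exp (- y)))) = exp (l * x) * exp (q * (l - (1 - exp (- y))))"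
    by (simp add: algebra_simps flip: exp_add)
  also have "\<dots> \<le> exp (l * x) * exp (- (e^2/12) * qm)"
  proof -
    have k: "l - (1 - exp (- y)) \<le> - (e^2/12)" using key_ineq[OF e] unfolding l_def y_def by simp
    have "q * (l - (1 - exp (- y))) \<le> q * (- (e^2/12))" using k q by (intro mult_left_mono) auto
    also have "\<dots> \<le> qm * (- (e^2/12))" using q by (intro mult_right_mono_neg) auto
    finally show ?thesis by (simp add: algebra_simps)
  qed
  finally show ?thesis unfolding l_def by simp
qed


lemma expect_bind_hist:
  fixes g :: "history \<Rightarrow> real"
  assumes finE: "\<And>h. finite (set_pmf (E h))"
  shows "measure_pmf.expectation (hist_pmf E (Suc t)) g
       = measure_pmf.expectation (hist_pmf E t) (\<lambda>h. measure_pmf.expectation (E h) (\<lambda>S. g (h @ [S])))"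
proof -
  have finH: "finite (set_pmf (hist_pmf E t))" using fin_hist finE by blast
  have "measure_pmf.expectation (hist_pmf E (Suc t)) g
     = (\<Sum>a\<in>set_pmf (hist_pmf E t). pmf (hist_pmf E t) a *\<^sub>R
          measure_pmf.expectation (map_pmf (\<lambda>S. a @ [S]) (E a)) g)"
    by (simp only: hist_pmf.simps, rule pmf_expectation_bind) (use finH finE in auto)
  also have "\<dots> = measure_pmf.expectation (hist_pmf E t) (\<lambda>h. measure_pmf.expectation (E h) (\<lambda>S. g (h @ [S])))"
    by (subst integral_measure_pmf[OF finH]) (auto simp: o_def)
  finally show ?thesis .
qed

lemma expect_bound:
  assumes vf: "valid_filler n F" and pe: "proportional_emptier n F E"
    and e: "0 < e" "e \<le> 1" and n: "1 \<le> n"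
  shows "measure_pmf.expectation (hist_pmf E t) (\<lambda>h. \<Sum>j<n. exp (e/4 * fills F e h j))
    \<le> real n / (1 - exp (- (e^2/12) * (1 / (real n)^2)))"
proof -
  define r where "r = exp (- (e^2/12) * (1 / (real n)^2))"
  define Phi where "Phi = (\<lambda>h. \<Sum>j<n. exp (e/4 * fills F e h j))"
  have r0: "0 < r" unfolding r_def by simp
  have r1: "r < 1" unfolding r_def using e n by simp
  have finE: "finite (set_pmf (E h))" for h
  proof -
    have "set_pmf (E h) \<subseteq> Pow {..<n}" using pe unfolding proportional_emptier_def by auto
    then show ?thesis by (rule finite_subset) simp
  qed
  have finH: "finite (set_pmf (hist_pmf E t))" for t using fin_hist finE by blast
  have inner: "measure_pmf.expectation (E h) (\<lambda>S. Phi (h @ [S])) \<le> real n + r * Phi h" for h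
  proof -
    have "measure_pmf.expectation (E h) (\<lambda>S. Phi (h @ [S]))
        = (\<Sum>j<n. measure_pmf.expectation (E h) (\<lambda>S. exp (e/4 * fills F e (h @ [S]) j)))"
      unfolding Phi_def by (simp add: integrable_measure_pmf_finite finE)
    also have "\<dots> \<le> (\<Sum>j<n. 1 + exp (e/4 * fills F e h j) * r)"
    proof (rule sum_mono)
      fix j assume j: "j \<in> {..<n}"
      have q: "0 \<le> snd (F h) j" "snd (F h) j \<le> 1" "1 / (real n)^2 \<le> snd (F h) j"
        using vf j unfolding valid_filler_def by auto
      have pr: "measure_pmf.prob (E h) {S. j \<in> S} = snd (F h) j"
        using pe j unfolding proportional_emptier_def by auto
      show "measure_pmf.expectation (E h) (\<lambda>S. exp (e/4 * fills F e (h @ [S]) j))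
          \<le> 1 + exp (e/4 * fills F e h j) * r"
        unfolding fills_snoc Let_def r_def
        by (rule cup_step[OF finE e q pr])
    qed
    also have "\<dots> = real n + r * Phi h"
      unfolding Phi_def by (simp add: sum.distrib sum_distrib_left algebra_simps)
    finally show ?thesis .
  qed
  show ?thesis
  proof (induction t)
    case 0
    have "Phi [] = real n" unfolding Phi_def fills_def by simp
    moreover have "real n \<le> real n / (1 - r)" using r0 r1 by (simp add: field_simps)
    ultimately show ?case unfolding Phi_def[symmetric] r_def[symmetric] by simp
  next
    case (Suc t)
    have "measure_pmf.expectation (hist_pmf E (Suc t)) Phi
       = measure_pmf.expectation (hist_pmf E t) (\<lambda>h. measure_pmf.expectation (E h) (\<lambda>S. Phi (h @ [S])))"
      by (rule expect_bind_hist[OF finE])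
    also have "\<dots> \<le> measure_pmf.expectation (hist_pmf E t) (\<lambda>h. real n + r * Phi h)"
      using inner by (intro integral_mono integrable_measure_pmf_finite finH) auto
    also have "\<dots> = real n + r * measure_pmf.expectation (hist_pmf E t) Phi"
      by (simp add: integrable_measure_pmf_finite finH)
    also have "\<dots> \<le> real n + r * (real n / (1 - r))"
      using Suc r0 unfolding Phi_def r_def by (intro add_left_mono mult_left_mono) auto
    also have "\<dots> = real n / (1 - r)" using r1 by (simp add: field_simps)
    finally show ?case unfolding Phi_def r_def .
  qed
qed


lemma one_minus_exp_ge: "0 \<le> (u::real) \<Longrightarrow> u \<le> 1 \<Longrightarrow> u / 2 \<le> 1 - exp (- u)"
proof -
  assume u: "0 \<le> u" "u \<le> 1"
  have "exp (- u) \<le> 1 / (1 + u)" using exp_neg_le u by simp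
  moreover have "u * u \<le> u * 1" using u by (intro mult_left_mono) auto
  then have "u / 2 \<le> 1 - 1 / (1 + u)" using u by (simp add: field_simps)
  ultimately show ?thesis by simp
qed

lemma final_arith:
  fixes m e c :: real
  assumes m: "2 \<le> m" and e: "1 \<le> m * e" "e \<le> 1" and c: "0 < c"
  shows "m / (1 - exp (- (e^2/12) * (1 / m^2))) / exp (e/4 * (4 * (c + 10) / e * ln m))
      \<le> 1 / m powr c"
proof -
  have e0: "0 < e"
  proof (rule ccontr)
    assume "\<not> 0 < e"
    then have "m * e \<le> 0" using m by (intro mult_nonneg_nonpos) auto
    then show False using e by simp
  qed
  define u where "u = e^2/12 * (1 / m^2)"
  have em: "1 / m \<le> e" using e m by (simp add: field_simps)
  have e2: "(1/m)^2 \<le> e^2" using em m by (intro power_mono) auto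
  have e21: "e^2 \<le> 1" using e e0 by (simp add: power_le_one)
  have "1 \<le> m^2" using m by (simp add: one_le_power)
  then have "e^2 \<le> 12 * m^2" using e21 by linarith
  then have u0: "0 \<le> u" "u \<le> 1" unfolding u_def using m by (auto simp: field_simps)
  have ulow: "1 / (12 * m^4) \<le> u" unfolding u_def using e2 m
    by (simp add: field_simps power2_eq_square power4_eq_xxxx)
  have "1 / (24 * m^4) \<le> u / 2" using ulow by simp
  also have "\<dots> \<le> 1 - exp (- u)" using one_minus_exp_ge u0 by simp
  finally have low: "1 / (24 * m^4) \<le> 1 - exp (- u)" .
  have pos: "0 < 1 / (24 * m^4)" using m by simp
  have "0 < 1 / (12 * m^4)" using m by simp
  then have upos: "0 < u" using ulow by linarith
  have "m / (1 - exp (- u)) \<le> m / (1 / (24 * m^4))"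
    using low pos m upos by (intro divide_left_mono mult_pos_pos) auto
  also have "\<dots> = 24 * m^5" by (simp add: field_simps power_numeral_reduce)
  finally have B: "m / (1 - exp (- u)) \<le> 24 * m^5" .
  have ex: "exp (e/4 * (4 * (c + 10) / e * ln m)) = m powr c * m^10"
  proof -
    have "e/4 * (4 * (c + 10) / e * ln m) = (c + 10) * ln m" using e0 by (simp add: field_simps)
    then have "exp (e/4 * (4 * (c + 10) / e * ln m)) = m powr (c + 10)" using m by (simp add: powr_def)
    also have "\<dots> = m powr c * m powr 10" by (simp add: powr_add)
    also have "m powr 10 = m^10" using m by (simp add: powr_realpow)
    finally show ?thesis .
  qed
  have mpc: "0 < m powr c" using m by simp
  have m5: "32 \<le> m^5" using power_mono[OF m, of 5] by simp
  have "m / (1 - exp (- u)) / (m powr c * m^10) \<le> 24 * m^5 / (m powr c * m^10)"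
    using B mpc m by (intro divide_right_mono) auto
  also have "\<dots> = (24 / m^5) / m powr c" using m by (simp add: field_simps power_numeral_reduce)
  also have "\<dots> \<le> 1 / m powr c"
  proof -
    have "24 / m^5 \<le> 1" using m5 m by (simp add: divide_le_eq)
    then show ?thesis using mpc by (intro divide_right_mono) auto
  qed
  finally show ?thesis unfolding ex u_def by simp
qed


theorem lemma7p4:
  fixes eps :: "nat \<Rightarrow> real"
  assumes "\<And>n. eps n \<le> 1"
    and "filterlim (\<lambda>n. real n * eps n) at_top sequentially"
  shows "\<forall>c>0. \<exists>C>0. \<exists>N. \<forall>n\<ge>N. \<forall>F E t.
           valid_filler n F \<longrightarrow> proportional_emptier n F E \<longrightarrow>
           measure_pmf.prob (hist_pmf E t)
             {h. backlog n F (eps n) h \<le> C / eps n * ln (real n)}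
           \<ge> 1 - 1 / real n powr c"
proof (intro allI impI)
  fix c :: real assume c: "0 < c"
  have "eventually (\<lambda>n. 1 \<le> real n * eps n) sequentially"
    using assms(2) by (simp add: filterlim_at_top)
  then obtain N0 where N0: "\<And>n. n \<ge> N0 \<Longrightarrow> 1 \<le> real n * eps n"
    by (auto simp: eventually_sequentially)
  show "\<exists>C>0. \<exists>N. \<forall>n\<ge>N. \<forall>F E t.
           valid_filler n F \<longrightarrow> proportional_emptier n F E \<longrightarrow>
           measure_pmf.prob (hist_pmf E t)
             {h. backlog n F (eps n) h \<le> C / eps n * ln (real n)}
           \<ge> 1 - 1 / real n powr c"
  proof (intro exI[of _ "4 * (c + 10)"] conjI exI[of _ "max N0 2"] allI impI)
    show "0 < 4 * (c + 10)" using c by simp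
    fix n F E t
    assume nN: "max N0 2 \<le> n" and vf: "valid_filler n F" and pe: "proportional_emptier n F E"
    define e where "e = eps n"
    define m where "m = real n"
    have m2: "2 \<le> m" using nN unfolding m_def by simp
    have me: "1 \<le> m * e" using N0 nN unfolding m_def e_def by simp
    have e1: "e \<le> 1" using assms(1) unfolding e_def by simp
    have e0: "0 < e"
    proof (rule ccontr)
      assume "\<not> 0 < e"
      then have "m * e \<le> 0" using m2 by (intro mult_nonneg_nonpos) auto
      then show False using me by simp
    qed
    define a where "a = 4 * (c + 10) / e * ln m"
    define Phi where "Phi = (\<lambda>h. \<Sum>j<n. exp (e/4 * fills F e h j))"
    define T where "T = exp (e/4 * a)"
    have T0: "0 < T" unfolding T_def by simp
    have finE: "finite (set_pmf (E h))" for h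
    proof -
      have "set_pmf (E h) \<subseteq> Pow {..<n}" using pe unfolding proportional_emptier_def by auto
      then show ?thesis by (rule finite_subset) simp
    qed
    have finH: "finite (set_pmf (hist_pmf E t))" using fin_hist finE by blast
    have EB: "measure_pmf.expectation (hist_pmf E t) Phi
        \<le> m / (1 - exp (- (e^2/12) * (1 / m^2)))"
      unfolding Phi_def m_def using expect_bound[OF vf pe e0 e1] nN by simp
    have Mk: "measure_pmf.prob (hist_pmf E t) {h \<in> space (measure_pmf (hist_pmf E t)). Phi h \<ge> T}
        \<le> measure_pmf.expectation (hist_pmf E t) Phi / T"
      using T0 by (intro integral_Markov_inequality_measure[where A = UNIV])
        (auto intro!: integrable_measure_pmf_finite finH AE_I2 sum_nonneg simp: Phi_def)
    have sub: "UNIV - {h. Phi h \<ge> T} \<subseteq> {h. backlog n F e h \<le> a}"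
    proof
      fix h assume h: "h \<in> UNIV - {h. Phi h \<ge> T}"
      show "h \<in> {h. backlog n F e h \<le> a}"
      proof (rule ccontr)
        assume "h \<notin> {h. backlog n F e h \<le> a}"
        then have ba: "a < backlog n F e h" by simp
        have "0 \<in> {..<n}" using nN by auto
        then have ne: "{..<n} \<noteq> {}" by blast
        have "backlog n F e h \<in> (\<lambda>j. fills F e h j) ` {..<n}"
          unfolding backlog_def using ne by (intro Max_in) auto
        then obtain j where j: "j < n" "fills F e h j = backlog n F e h" by auto
        have "T \<le> exp (e/4 * fills F e h j)" unfolding T_def using j ba e0 by simp
        also have "\<dots> \<le> Phi h" unfolding Phi_def using j
          by (intro member_le_sum) auto
        finally show False using h by simp
      qed
    qed
    have "1 - measure_pmf.prob (hist_pmf E t) {h. Phi h \<ge> T}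
        = measure_pmf.prob (hist_pmf E t) (UNIV - {h. Phi h \<ge> T})"
      using measure_pmf.prob_compl[of "{h. Phi h \<ge> T}" "hist_pmf E t"] by simp
    also have "\<dots> \<le> measure_pmf.prob (hist_pmf E t) {h. backlog n F e h \<le> a}"
      using sub by (intro measure_pmf.finite_measure_mono) auto
    finally have P1: "1 - measure_pmf.prob (hist_pmf E t) {h. Phi h \<ge> T}
        \<le> measure_pmf.prob (hist_pmf E t) {h. backlog n F e h \<le> a}" .
    have "measure_pmf.prob (hist_pmf E t) {h. Phi h \<ge> T}
        \<le> m / (1 - exp (- (e^2/12) * (1 / m^2))) / T"
      using Mk order.trans[OF Mk divide_right_mono[OF EB, of T]] T0 by simp
    also have "\<dots> \<le> 1 / m powr c"
      unfolding T_def a_def using final_arith[OF m2 me e1 c] by simp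
    finally have P2: "measure_pmf.prob (hist_pmf E t) {h. Phi h \<ge> T} \<le> 1 / m powr c" .
    show "1 - 1 / real n powr c \<le> measure_pmf.prob (hist_pmf E t)
             {h. backlog n F (eps n) h \<le> 4 * (c + 10) / eps n * ln (real n)}"
      using P1 P2 unfolding a_def e_def m_def by simp
  qed
qed

end
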